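(* The Perfect Split Heuristic $h$ is consistent on $\mathcal G_{\mathcal X,\mathcal Y}$: for every OR node $o$ with terminal child $t$ and AND children $a_1,\dots,a_s$, $$h(o)\le\min_{c\in\{t,a_1,\dots,a_s\}}\big(\mathrm{cost}(o,c)+h(c)\big),$$ and for every AND node $a$ with children $o_0,o_1$, $$h(a)\le\sum_{c\in\{o_0,o_1\}}\big(\mathrm{cost}(a,c)+h(c)\big).$$
   Context: Let $x_1,\dots,x_N\in\{0,1\}^F$ be a binary dataset $\mathcal X$ with labels $\mathcal Y\in\{0,1\}^N$, $[N]=\{1,\dots,N\}$. For $\mathcal I\subseteq[N]$, $f\in[F]$, $k\in\{0,1\}$ let $\mathcal I|_{f=k}=\{i\in\mathcal I:(x_i)_f=k\}$, $c^k(\mathcal I)=|\{i\in\mathcal I:y_i=k\}|$, $\mathcal V(\mathcal I)=\{f:\mathcal I|_{f=0}\neq\emptyset\text{ and }\mathcal I|_{f=1}\neq\emptyset\}$. Fix $\rho^1,\rho^0>0$, $\alpha\in(0,1)$, $\beta\ge0$. Let $\ell_{\rm leaf}(c^1,c^0)=B(c^1+\rho^1,c^0+\rho^0)/B(\rho^1,\rho^0)$ ($B$ the Beta function), $p_{\rm split}(d)=\alpha(1+d)^{-\beta}$, $p_{\rm leaf}(d,\mathcal I)=1$ if $\mathcal V(\mathcal I)=\emptyset$ and $1-p_{\rm split}(d)$ otherwise, $p_{\rm inner}(d,\mathcal I)=0$ if $\mathcal V(\mathcal I)=\emptyset$ and $p_{\rm split}(d)/|\mathcal V(\mathcal I)|$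 otherwise; $-\log0=+\infty$. $\mathcal G_{\mathcal X,\mathcal Y}$: for nonempty $\mathcal I\subseteq[N]$ and $d\in\{0,\dots,F\}$, an OR node $o_{\mathcal I,d}$ with a terminal child $t_{\mathcal I,d}$ via an edge of cost $-\log p_{\rm leaf}(d,\mathcal I)-\log\ell_{\rm leaf}(c^1(\mathcal I),c^0(\mathcal I))$; for $d<F$ and each $f\in\mathcal V(\mathcal I)$ an AND child $a_{\mathcal I,d,f}$ via an edge of cost $-\log p_{\rm inner}(d,\mathcal I)$, and $a_{\mathcal I,d,f}$ has cost-$0$ edges to $o_{\mathcal I|_{f=0},d+1}$ and $o_{\mathcal I|_{f=1},d+1}$; the root is $r=o_{[N],0}$ and only nodes reachable from $r$ are kept. $\mathrm{cost}(u,v)$ denotes the cost of edge $u\to v$. Perfect Split Heuristic: $h(t)=0$ for terminal nodes; $h(o_{\mathcal I,d})=-\max\{\log\ell_{\rm leaf}(c^1(\mathcal I),c^0(\mathcal I)),\ \log p_{\rm split}(d)+\log\ell_{\rm leaf}(c^1(\mathcal I),0)+\log\ell_{\rm leaf}(0,c^0(\mathcal I))\}$; $h(a_{\mathcal I,d,f})=h(o_{\mathcal I|_{f=0},d+1})+h(o_{\mathcal I|_{f=1},d+1})$. *)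

theory Defs
  imports "HOL-Analysis.Analysis"
begin

text \<open>Dataset: N points, F features. Point i (1 \<le> i \<le> N) has feature f (1 \<le> f \<le> F)
  equal to 1 iff X i f, and label 1 iff Y i. Only values on [N] x [F] matter.\<close>

definition restr :: "(nat \<Rightarrow> nat \<Rightarrow> bool) \<Rightarrow> nat set \<Rightarrow> nat \<Rightarrow> bool \<Rightarrow> nat set" where
  "restr X I f k = {i \<in> I. X i f = k}"

definition cnt :: "(nat \<Rightarrow> bool) \<Rightarrow> nat set \<Rightarrow> bool \<Rightarrow> nat" where
  "cnt Y I k = card {i \<in> I. Y i = k}"

definition Vset :: "nat \<Rightarrow> (nat \<Rightarrow> nat \<Rightarrow> bool) \<Rightarrow> nat set \<Rightarrow> nat set" where
  "Vset F X I = {f \<in> {1..F}. restr X I f False \<noteq> {} \<and> restr X I f True \<noteq> {}}"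

definition lleaf :: "real \<Rightarrow> real \<Rightarrow> nat \<Rightarrow> nat \<Rightarrow> real" where
  "lleaf \<rho>1 \<rho>0 c1 c0 = Beta (real c1 + \<rho>1) (real c0 + \<rho>0) / Beta \<rho>1 \<rho>0"

definition psplit :: "real \<Rightarrow> real \<Rightarrow> nat \<Rightarrow> real" where
  "psplit \<alpha> \<beta> d = \<alpha> * (1 + real d) powr (- \<beta>)"

definition pleaf :: "real \<Rightarrow> real \<Rightarrow> nat \<Rightarrow> (nat \<Rightarrow> nat \<Rightarrow> bool) \<Rightarrow> nat \<Rightarrow> nat set \<Rightarrow> real" where
  "pleaf \<alpha> \<beta> F X d I = (if Vset F X I = {} then 1 else 1 - psplit \<alpha> \<beta> d)"

definition pinner :: "real \<Rightarrow> real \<Rightarrow> nat \<Rightarrow> (nat \<Rightarrow> nat \<Rightarrow> bool) \<Rightarrow> nat \<Rightarrow> nat set \<Rightarrow> real" where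
  "pinner \<alpha> \<beta> F X d I =
     (if Vset F X I = {} then 0 else psplit \<alpha> \<beta> d / real (card (Vset F X I)))"

definition nlog :: "real \<Rightarrow> ereal" where
  "nlog p = (if p = 0 then \<infinity> else ereal (- ln p))"

datatype node = OrN "nat set" nat | TermN "nat set" nat | AndN "nat set" nat nat

text \<open>Edges of the AND/OR graph before restricting to nodes reachable from the root.\<close>
fun edge :: "nat \<Rightarrow> nat \<Rightarrow> (nat \<Rightarrow> nat \<Rightarrow> bool) \<Rightarrow> node \<Rightarrow> node \<Rightarrow> bool" where
  "edge N F X (OrN I d) (TermN J e) \<longleftrightarrow>
     I \<noteq> {} \<and> I \<subseteq> {1..N} \<and> d \<le> F \<and> J = I \<and> e = d"
| "edge N F X (OrN I d) (AndN J e f) \<longleftrightarrow>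
     I \<noteq> {} \<and> I \<subseteq> {1..N} \<and> d < F \<and> f \<in> Vset F X I \<and> J = I \<and> e = d"
| "edge N F X (AndN I d f) (OrN J e) \<longleftrightarrow>
     I \<noteq> {} \<and> I \<subseteq> {1..N} \<and> d < F \<and> f \<in> Vset F X I \<and> e = d + 1 \<and>
     (J = restr X I f False \<or> J = restr X I f True)"
| "edge N F X _ _ \<longleftrightarrow> False"

definition root :: "nat \<Rightarrow> node" where
  "root N = OrN {1..N} 0"

definition reachable :: "nat \<Rightarrow> nat \<Rightarrow> (nat \<Rightarrow> nat \<Rightarrow> bool) \<Rightarrow> node \<Rightarrow> bool" where
  "reachable N F X v \<longleftrightarrow> (root N, v) \<in> {(u, w). edge N F X u w}\<^sup>*"

text \<open>Edge costs (only meaningful on actual edges).\<close>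
fun cost :: "real \<Rightarrow> real \<Rightarrow> real \<Rightarrow> real \<Rightarrow> nat \<Rightarrow> (nat \<Rightarrow> nat \<Rightarrow> bool) \<Rightarrow> (nat \<Rightarrow> bool)
             \<Rightarrow> node \<Rightarrow> node \<Rightarrow> ereal" where
  "cost \<rho>1 \<rho>0 \<alpha> \<beta> F X Y (OrN I d) (TermN J e) =
     nlog (pleaf \<alpha> \<beta> F X d I) + nlog (lleaf \<rho>1 \<rho>0 (cnt Y I True) (cnt Y I False))"
| "cost \<rho>1 \<rho>0 \<alpha> \<beta> F X Y (OrN I d) (AndN J e f) = nlog (pinner \<alpha> \<beta> F X d I)"
| "cost \<rho>1 \<rho>0 \<alpha> \<beta> F X Y (AndN I d f) (OrN J e) = 0"
| "cost \<rho>1 \<rho>0 \<alpha> \<beta> F X Y _ _ = 0"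

definition hOr :: "real \<Rightarrow> real \<Rightarrow> real \<Rightarrow> real \<Rightarrow> (nat \<Rightarrow> bool) \<Rightarrow> nat set \<Rightarrow> nat \<Rightarrow> real" where
  "hOr \<rho>1 \<rho>0 \<alpha> \<beta> Y I d =
     - max (ln (lleaf \<rho>1 \<rho>0 (cnt Y I True) (cnt Y I False)))
           (ln (psplit \<alpha> \<beta> d) + ln (lleaf \<rho>1 \<rho>0 (cnt Y I True) 0)
              + ln (lleaf \<rho>1 \<rho>0 0 (cnt Y I False)))"

fun heur :: "real \<Rightarrow> real \<Rightarrow> real \<Rightarrow> real \<Rightarrow> (nat \<Rightarrow> nat \<Rightarrow> bool) \<Rightarrow> (nat \<Rightarrow> bool) \<Rightarrow> node \<Rightarrow> real" where
  "heur \<rho>1 \<rho>0 \<alpha> \<beta> X Y (TermN I d) = 0"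
| "heur \<rho>1 \<rho>0 \<alpha> \<beta> X Y (OrN I d) = hOr \<rho>1 \<rho>0 \<alpha> \<beta> Y I d"
| "heur \<rho>1 \<rho>0 \<alpha> \<beta> X Y (AndN I d f) =
     hOr \<rho>1 \<rho>0 \<alpha> \<beta> Y (restr X I f False) (d + 1) + hOr \<rho>1 \<rho>0 \<alpha> \<beta> Y (restr X I f True) (d + 1)"

end

theory Submission imports Defs begin

lemma ln_le_sum: "(a::real) > 0 \<Longrightarrow> b > 0 \<Longrightarrow> c > 0 \<Longrightarrow> a \<le> b * c \<Longrightarrow> ln a \<le> ln b + ln c"
  by (subst ln_mult_pos[symmetric]) auto
lemma ln_sum_le: "(a::real) > 0 \<Longrightarrow> b > 0 \<Longrightarrow> c > 0 \<Longrightarrow> b * c \<le> a \<Longrightarrow> ln b + ln c \<le> ln a"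
  by (subst ln_mult_pos[symmetric]) auto

lemma Beta_pos_real: "(x::real) > 0 \<Longrightarrow> y > 0 \<Longrightarrow> Beta x y > 0"
  unfolding Beta_def by simp

lemma pos_not_npi: "(x::real) > 0 \<Longrightarrow> x \<notin> \<int>\<^sub>\<le>\<^sub>0"
  by (auto elim!: nonpos_Ints_cases)

lemma Beta_step: assumes "(x::real) > 0" "y > 0"
  shows "Beta (x+1) y = x/(x+y) * Beta x y"
  using Beta_plus1_left[OF pos_not_npi[OF assms(1)], of y] assms
  by (simp add: field_simps)

lemma claimA: assumes "(p::real) > 0" "q > 0"
  shows "Beta (real a + p) (real b + q) * Beta p q \<le> Beta (real a + p) q * Beta p (real b + q)"
proof (induction a)
  case 0 then show ?case by simp
next
  case (Suc a)
  have e1: "Beta (real (Suc a) + p) (real b + q) = (real a + p)/(real a + p + real b + q) * Beta (real a + p) (real b + q)"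
    using Beta_step[of "real a + p" "real b + q"] assms by (simp add: add_ac)
  have e2: "Beta (real (Suc a) + p) q = (real a + p)/(real a + p + q) * Beta (real a + p) q"
    using Beta_step[of "real a + p" "q"] assms by (simp add: add_ac)
  have f: "(real a + p)/(real a + p + real b + q) \<le> (real a + p)/(real a + p + q)"
    using assms by (intro divide_left_mono) auto
  have pos: "Beta p (real b + q) > 0" "Beta (real a + p) (real b + q) * Beta p q \<ge> 0"
    using assms by (auto intro!: Beta_pos_real less_imp_le[OF mult_pos_pos])
  have "Beta (real (Suc a) + p) (real b + q) * Beta p q
      = (real a + p)/(real a + p + real b + q) * (Beta (real a + p) (real b + q) * Beta p q)"
    unfolding e1 by (simp add: ac_simps)
  also have "\<dots> \<le> (real a + p)/(real a + p + q) * (Beta (real a + p) (real b + q) * Beta p q)"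
    using f pos by (intro mult_right_mono) auto
  also have "\<dots> \<le> (real a + p)/(real a + p + q) * (Beta (real a + p) q * Beta p (real b + q))"
    using Suc assms by (intro mult_left_mono) auto
  also have "\<dots> = Beta (real (Suc a) + p) q * Beta p (real b + q)" unfolding e2 by (simp add: ac_simps)
  finally show ?case .
qed

lemma claimB: assumes "(p::real) > 0" "q > 0"
  shows "Beta (real a + p) q * Beta (real b + p) q \<le> Beta (real (a+b) + p) q * Beta p q"
proof (induction b)
  case 0 then show ?case by simp
next
  case (Suc b)
  have e1: "Beta (real (a + Suc b) + p) q = (real (a+b) + p)/(real (a+b) + p + q) * Beta (real (a+b) + p) q"
    using Beta_step[of "real (a+b) + p" "q"] assms by (simp add: add_ac)
  have e2: "Beta (real (Suc b) + p) q = (real b + p)/(real b + p + q) * Beta (real b + p) q"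
    using Beta_step[of "real b + p" "q"] assms by (simp add: add_ac)
  have f: "(real b + p)/(real b + p + q) \<le> (real (a+b) + p)/(real (a+b) + p + q)"
    using assms by (simp add: divide_simps) (simp add: algebra_simps mult_left_mono)
  have pos: "Beta (real a + p) q > 0" "Beta (real (a+b) + p) q * Beta p q \<ge> 0" "Beta (real b + p) q > 0"
    using assms by (auto intro!: Beta_pos_real less_imp_le[OF mult_pos_pos])
  have "Beta (real a + p) q * Beta (real (Suc b) + p) q
      = (real b + p)/(real b + p + q) * (Beta (real a + p) q * Beta (real b + p) q)"
    unfolding e2 by (simp add: ac_simps)
  also have "\<dots> \<le> (real (a+b) + p)/(real (a+b) + p + q) * (Beta (real a + p) q * Beta (real b + p) q)"
    using f pos by (intro mult_right_mono) auto
  also have "\<dots> \<le> (real (a+b) + p)/(real (a+b) + p + q) * (Beta (real (a+b) + p) q * Beta p q)"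
    using Suc assms by (intro mult_left_mono) auto
  also have "\<dots> = Beta (real (a + Suc b) + p) q * Beta p q" unfolding e1 by (simp add: ac_simps)
  finally show ?case .
qed

context
  fixes \<rho>1 \<rho>0 :: real
  assumes r1: "\<rho>1 > 0" and r0: "\<rho>0 > 0"
begin

lemma lleaf_pos: "lleaf \<rho>1 \<rho>0 a b > 0"
  unfolding lleaf_def using r1 r0 by (auto intro!: divide_pos_pos Beta_pos_real)

lemma B0pos: "Beta \<rho>1 \<rho>0 > 0" using r1 r0 by (rule Beta_pos_real)

lemma LA: "ln (lleaf \<rho>1 \<rho>0 a b) \<le> ln (lleaf \<rho>1 \<rho>0 a 0) + ln (lleaf \<rho>1 \<rho>0 0 b)"
proof -
  have "lleaf \<rho>1 \<rho>0 a b = (Beta (real a + \<rho>1) (real b + \<rho>0) * Beta \<rho>1 \<rho>0) / (Beta \<rho>1 \<rho>0 * Beta \<rho>1 \<rho>0)"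
    unfolding lleaf_def using B0pos by (simp add: nonzero_mult_divide_mult_cancel_right)
  also have "\<dots> \<le> (Beta (real a + \<rho>1) \<rho>0 * Beta \<rho>1 (real b + \<rho>0)) / (Beta \<rho>1 \<rho>0 * Beta \<rho>1 \<rho>0)"
    using claimA[OF r1 r0, of a b] B0pos by (intro divide_right_mono) auto
  also have "\<dots> = lleaf \<rho>1 \<rho>0 a 0 * lleaf \<rho>1 \<rho>0 0 b"
    unfolding lleaf_def by simp
  finally show ?thesis using lleaf_pos
    by (intro ln_le_sum ln_sum_le) auto
qed

lemma LB1: "ln (lleaf \<rho>1 \<rho>0 a 0) + ln (lleaf \<rho>1 \<rho>0 b 0) \<le> ln (lleaf \<rho>1 \<rho>0 (a+b) 0)"
proof -
  have "lleaf \<rho>1 \<rho>0 a 0 * lleaf \<rho>1 \<rho>0 b 0 = (Beta (real a + \<rho>1) \<rho>0 * Beta (real b + \<rho>1) \<rho>0) / (Beta \<rho>1 \<rho>0 * Beta \<rho>1 \<rho>0)"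
    unfolding lleaf_def by simp
  also have "\<dots> \<le> (Beta (real (a+b) + \<rho>1) \<rho>0 * Beta \<rho>1 \<rho>0) / (Beta \<rho>1 \<rho>0 * Beta \<rho>1 \<rho>0)"
    using claimB[OF r1 r0, of a b] B0pos by (intro divide_right_mono) auto
  also have "\<dots> = lleaf \<rho>1 \<rho>0 (a+b) 0"
    unfolding lleaf_def using B0pos by simp
  finally show ?thesis using lleaf_pos
    by (intro ln_le_sum ln_sum_le) auto
qed

lemma LB2: "ln (lleaf \<rho>1 \<rho>0 0 a) + ln (lleaf \<rho>1 \<rho>0 0 b) \<le> ln (lleaf \<rho>1 \<rho>0 0 (a+b))"
proof -
  have c: "\<And>x. Beta \<rho>1 x = Beta x \<rho>1" by (rule Beta_commute)
  have "lleaf \<rho>1 \<rho>0 0 a * lleaf \<rho>1 \<rho>0 0 b = (Beta (real a + \<rho>0) \<rho>1 * Beta (real b + \<rho>0) \<rho>1) / (Beta \<rho>0 \<rho>1 * Beta \<rho>0 \<rho>1)"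
    unfolding lleaf_def by (simp add: c)
  also have "\<dots> \<le> (Beta (real (a+b) + \<rho>0) \<rho>1 * Beta \<rho>0 \<rho>1) / (Beta \<rho>0 \<rho>1 * Beta \<rho>0 \<rho>1)"
    using claimB[OF r0 r1, of a b] B0pos by (intro divide_right_mono) (auto simp: c)
  also have "\<dots> = lleaf \<rho>1 \<rho>0 0 (a+b)"
    unfolding lleaf_def using B0pos by (simp add: c)
  finally show ?thesis using lleaf_pos
    by (intro ln_le_sum ln_sum_le) auto
qed

end

lemma psplit_bounds: assumes "0 < \<alpha>" "\<alpha> < 1" "\<beta> \<ge> 0"
  shows "0 < psplit \<alpha> \<beta> d" "psplit \<alpha> \<beta> d < 1"
proof -
  have g: "(1 + real d) powr \<beta> \<ge> 1" using assms by (intro ge_one_powr_ge_zero) auto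
  have e: "(1 + real d) powr (-\<beta>) = 1 / (1 + real d) powr \<beta>" by (simp add: powr_minus_divide)
  show "0 < psplit \<alpha> \<beta> d" unfolding psplit_def using assms by simp
  have "(1 + real d) powr (-\<beta>) \<le> 1" unfolding e using g by simp
  then show "psplit \<alpha> \<beta> d < 1" unfolding psplit_def using assms
    by (smt (verit) mult_left_le powr_ge_zero)
qed

lemma cnt_split: assumes "finite I"
  shows "cnt Y (restr X I f False) k + cnt Y (restr X I f True) k = cnt Y I k"
proof -
  let ?A = "{i \<in> I. X i f = False \<and> Y i = k}"
  let ?B = "{i \<in> I. X i f = True \<and> Y i = k}"
  have u: "{i \<in> I. Y i = k} = ?A \<union> ?B" by auto
  have d: "?A \<inter> ?B = {}" by auto
  have fa: "finite ?A" "finite ?B" using assms by auto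
  have "card (?A \<union> ?B) = card ?A + card ?B" using card_Un_disjoint[OF fa d] .
  moreover have "{i \<in> restr X I f False. Y i = k} = ?A" "{i \<in> restr X I f True. Y i = k} = ?B"
    unfolding restr_def by auto
  ultimately show ?thesis unfolding cnt_def u by simp
qed


lemma nlog_pos: "p > 0 \<Longrightarrow> nlog p = ereal (- ln p)"
  unfolding nlog_def by simp

lemma reach_And:
  assumes "reachable N F X (AndN I d f)"
  shows "I \<noteq> {} \<and> I \<subseteq> {1..N} \<and> d < F \<and> f \<in> Vset F X I"
proof -
  have "(root N, AndN I d f) \<in> {(u, w). edge N F X u w}\<^sup>*"
    using assms unfolding reachable_def by simp
  then show ?thesis
  proof (cases rule: rtranclE)
    case base then show ?thesis by (simp add: root_def)
  next
    case (step u)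
    then have "edge N F X u (AndN I d f)" by simp
    then show ?thesis by (cases u) auto
  qed
qed

context
  fixes \<rho>1 \<rho>0 \<alpha> \<beta> :: real
  assumes r1: "\<rho>1 > 0" and r0: "\<rho>0 > 0" and a0: "0 < \<alpha>" and a1: "\<alpha> < 1" and b0: "\<beta> \<ge> 0"
begin

lemma hOr_up1: "hOr \<rho>1 \<rho>0 \<alpha> \<beta> Y I d \<le> - ln (lleaf \<rho>1 \<rho>0 (cnt Y I True) (cnt Y I False))"
  unfolding hOr_def by simp

lemma hOr_up2: "hOr \<rho>1 \<rho>0 \<alpha> \<beta> Y I d \<le> - (ln (psplit \<alpha> \<beta> d) + ln (lleaf \<rho>1 \<rho>0 (cnt Y I True) 0)
              + ln (lleaf \<rho>1 \<rho>0 0 (cnt Y I False)))"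
  unfolding hOr_def by simp

lemma hOr_low: "hOr \<rho>1 \<rho>0 \<alpha> \<beta> Y I d \<ge> - (ln (lleaf \<rho>1 \<rho>0 (cnt Y I True) 0)
              + ln (lleaf \<rho>1 \<rho>0 0 (cnt Y I False)))"
proof -
  have "ln (psplit \<alpha> \<beta> d) \<le> 0" using psplit_bounds[OF a0 a1 b0, of d] by simp
  moreover have "ln (lleaf \<rho>1 \<rho>0 (cnt Y I True) (cnt Y I False)) \<le> ln (lleaf \<rho>1 \<rho>0 (cnt Y I True) 0)
              + ln (lleaf \<rho>1 \<rho>0 0 (cnt Y I False))" by (rule LA[OF r1 r0])
  ultimately show ?thesis unfolding hOr_def by simp
qed

lemma or_term:
  shows "ereal (hOr \<rho>1 \<rho>0 \<alpha> \<beta> Y I d) \<le> nlog (pleaf \<alpha> \<beta> F X d I)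
           + nlog (lleaf \<rho>1 \<rho>0 (cnt Y I True) (cnt Y I False)) + ereal 0"
proof -
  have ps: "0 < psplit \<alpha> \<beta> d" "psplit \<alpha> \<beta> d < 1" using psplit_bounds[OF a0 a1 b0] by auto
  have pl: "0 < pleaf \<alpha> \<beta> F X d I" "pleaf \<alpha> \<beta> F X d I \<le> 1"
    unfolding pleaf_def using ps by auto
  have "ln (pleaf \<alpha> \<beta> F X d I) \<le> 0" using pl by simp
  then have "hOr \<rho>1 \<rho>0 \<alpha> \<beta> Y I d \<le> - ln (pleaf \<alpha> \<beta> F X d I) + - ln (lleaf \<rho>1 \<rho>0 (cnt Y I True) (cnt Y I False))"
    using hOr_up1[of Y I d] by linarith
  then show ?thesis using pl lleaf_pos[OF r1 r0] by (simp add: nlog_pos)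
qed

lemma or_and:
  assumes fin: "finite I" and fV: "f \<in> Vset F X I"
  shows "ereal (hOr \<rho>1 \<rho>0 \<alpha> \<beta> Y I d) \<le> nlog (pinner \<alpha> \<beta> F X d I)
           + ereal (hOr \<rho>1 \<rho>0 \<alpha> \<beta> Y (restr X I f False) (d + 1) + hOr \<rho>1 \<rho>0 \<alpha> \<beta> Y (restr X I f True) (d + 1))"
proof -
  have ps: "0 < psplit \<alpha> \<beta> d" "psplit \<alpha> \<beta> d < 1" using psplit_bounds[OF a0 a1 b0] by auto
  have finV: "finite (Vset F X I)" unfolding Vset_def by auto
  have cV: "card (Vset F X I) \<ge> 1" using fV finV
    by (metis One_nat_def Suc_leI card_gt_0_iff empty_iff)
  have pin: "pinner \<alpha> \<beta> F X d I = psplit \<alpha> \<beta> d / real (card (Vset F X I))"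
    unfolding pinner_def using fV by auto
  have pinpos: "pinner \<alpha> \<beta> F X d I > 0" unfolding pin using ps cV by simp
  have lnp: "- ln (pinner \<alpha> \<beta> F X d I) \<ge> - ln (psplit \<alpha> \<beta> d)"
  proof -
    have "pinner \<alpha> \<beta> F X d I \<le> psplit \<alpha> \<beta> d" unfolding pin using ps cV
      by (simp add: divide_le_eq)
    then show ?thesis using pinpos by simp
  qed
  define J0 where "J0 = restr X I f False"
  define J1 where "J1 = restr X I f True"
  have c1: "cnt Y J0 True + cnt Y J1 True = cnt Y I True"
    unfolding J0_def J1_def by (rule cnt_split[OF fin])
  have c0: "cnt Y J0 False + cnt Y J1 False = cnt Y I False"
    unfolding J0_def J1_def by (rule cnt_split[OF fin])
  have l1: "ln (lleaf \<rho>1 \<rho>0 (cnt Y J0 True) 0) + ln (lleaf \<rho>1 \<rho>0 (cnt Y J1 True) 0) \<le> ln (lleaf \<rho>1 \<rho>0 (cnt Y I True) 0)"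
    using LB1[OF r1 r0, of "cnt Y J0 True" "cnt Y J1 True"] c1 by simp
  have l0: "ln (lleaf \<rho>1 \<rho>0 0 (cnt Y J0 False)) + ln (lleaf \<rho>1 \<rho>0 0 (cnt Y J1 False)) \<le> ln (lleaf \<rho>1 \<rho>0 0 (cnt Y I False))"
    using LB2[OF r1 r0, of "cnt Y J0 False" "cnt Y J1 False"] c0 by simp
  have "hOr \<rho>1 \<rho>0 \<alpha> \<beta> Y I d \<le> - ln (pinner \<alpha> \<beta> F X d I) + (hOr \<rho>1 \<rho>0 \<alpha> \<beta> Y J0 (d + 1) + hOr \<rho>1 \<rho>0 \<alpha> \<beta> Y J1 (d + 1))"
    using hOr_up2[of Y I d] hOr_low[of Y J0 "d+1"] hOr_low[of Y J1 "d+1"] l1 l0 lnp by linarith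
  then show ?thesis using pinpos unfolding J0_def J1_def by (simp add: nlog_pos)
qed

end

theorem theorem8:
  fixes N F :: nat and X :: "nat \<Rightarrow> nat \<Rightarrow> bool" and Y :: "nat \<Rightarrow> bool"
    and \<rho>1 \<rho>0 \<alpha> \<beta> :: real
  assumes "\<rho>1 > 0" and "\<rho>0 > 0" and "0 < \<alpha>" and "\<alpha> < 1" and "\<beta> \<ge> 0"
  shows "(\<forall>I d. reachable N F X (OrN I d) \<longrightarrow>
            ereal (heur \<rho>1 \<rho>0 \<alpha> \<beta> X Y (OrN I d))
              \<le> (INF c \<in> {c. edge N F X (OrN I d) c}.
                   cost \<rho>1 \<rho>0 \<alpha> \<beta> F X Y (OrN I d) c + ereal (heur \<rho>1 \<rho>0 \<alpha> \<beta> X Y c)))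
       \<and> (\<forall>I d f. reachable N F X (AndN I d f) \<longrightarrow>
            ereal (heur \<rho>1 \<rho>0 \<alpha> \<beta> X Y (AndN I d f))
              \<le> (\<Sum>c \<in> {c. edge N F X (AndN I d f) c}.
                   cost \<rho>1 \<rho>0 \<alpha> \<beta> F X Y (AndN I d f) c + ereal (heur \<rho>1 \<rho>0 \<alpha> \<beta> X Y c)))"
proof (intro conjI allI impI)
  fix I d
  show "ereal (heur \<rho>1 \<rho>0 \<alpha> \<beta> X Y (OrN I d))
              \<le> (INF c \<in> {c. edge N F X (OrN I d) c}.
                   cost \<rho>1 \<rho>0 \<alpha> \<beta> F X Y (OrN I d) c + ereal (heur \<rho>1 \<rho>0 \<alpha> \<beta> X Y c))"
  proof (rule INF_greatest)
    fix c assume "c \<in> {c. edge N F X (OrN I d) c}"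
    then have e: "edge N F X (OrN I d) c" by simp
    show "ereal (heur \<rho>1 \<rho>0 \<alpha> \<beta> X Y (OrN I d))
           \<le> cost \<rho>1 \<rho>0 \<alpha> \<beta> F X Y (OrN I d) c + ereal (heur \<rho>1 \<rho>0 \<alpha> \<beta> X Y c)"
    proof (cases c)
      case (OrN J e) then show ?thesis using e by simp
    next
      case (TermN J e') then show ?thesis using e or_term[OF assms, where F=F and X=X and I=I and d=d and Y=Y] by simp
    next
      case (AndN J e' f)
      then have "finite I" "f \<in> Vset F X I" "J = I" "e' = d" using e finite_subset by auto
      then show ?thesis using AndN or_and[OF assms, where F=F and X=X and I=I and d=d and Y=Y and f=f] by simp
    qed
  qed
next
  fix I d f
  assume "reachable N F X (AndN I d f)"
  then have h: "I \<noteq> {}" "I \<subseteq> {1..N}" "d < F" "f \<in> Vset F X I" using reach_And by blast+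
  have ne: "restr X I f False \<noteq> restr X I f True"
    using h(4) unfolding Vset_def restr_def by auto
  have S: "{c. edge N F X (AndN I d f) c} = {OrN (restr X I f False) (d+1), OrN (restr X I f True) (d+1)}"
  proof (intro set_eqI iffI)
    fix c assume "c \<in> {c. edge N F X (AndN I d f) c}"
    then show "c \<in> {OrN (restr X I f False) (d+1), OrN (restr X I f True) (d+1)}"
      by (cases c) auto
  next
    fix c assume "c \<in> {OrN (restr X I f False) (d+1), OrN (restr X I f True) (d+1)}"
    then show "c \<in> {c. edge N F X (AndN I d f) c}" using h by auto
  qed
  show "ereal (heur \<rho>1 \<rho>0 \<alpha> \<beta> X Y (AndN I d f))
              \<le> (\<Sum>c \<in> {c. edge N F X (AndN I d f) c}.
                   cost \<rho>1 \<rho>0 \<alpha> \<beta> F X Y (AndN I d f) c + ereal (heur \<rho>1 \<rho>0 \<alpha> \<beta> X Y c))"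
    unfolding S using ne by simp
qed

end
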